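(* Let $h\ge0$, let $m\in U$ and let $(u_{\alpha,\beta})_{\alpha+\beta\le h}$ be an element of $R_h$ at $m$. Put $v^{(k)}:=u_{0,k}$ for $0\le k\le h$. Then the whole element is determined by $v^{(0)},\dots,v^{(h)}$; more precisely, for all $\alpha+\beta\le h$, $$u_{\alpha,\beta}=\sum_{k=0}^{\alpha+\beta}E^k_{\alpha,\beta}\,v^{(k)},$$ where the $(d-2)\times(d-2)$ matrices $E^k_{\alpha,\beta}$ depend only on $M$ and its partial derivatives and are determined by $E^k_{0,k}=\mathrm{Id}_{d-2}$, $E^{h'}_{0,k}=0$ for $h'<k$, the convention $E^{h'}_{\gamma,\delta}=0$ if $h'>\gamma+\delta$, and the recursion (on $\alpha+\beta$, then on $\alpha$ for fixed $\alpha+\beta$) $$E^{h'}_{\alpha+1,\beta}=-(J_0I^0)\,E^{h'}_{\alpha,\beta+1}+\sum_{\gamma=0}^{\alpha}\sum_{\delta=0}^{\beta}(J_0M^{\gamma,\delta}_{\alpha,\beta})\,E^{h'}_{\gamma,\delta}.$$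
   Context: Let $d\ge 3$, $U\subset\mathbb{C}^2$ open with coordinates $(x,y)$, and let $M$ be the $(d-1)\times(d-2)$ matrix of holomorphic functions on $U$ defined as follows. Let $F(x,y,p)=\sum_{i=0}^d a_i(x,y)p^{d-i}$, $a_i$ holomorphic, $a_0\equiv1$, with $F=\prod_{i=1}^d(p-p_i(x,y))$, the $p_i$ holomorphic and pairwise distinct at every point. A polynomial $P=\sum_{i=0}^kg_ip^i$ is identified with $(g_0,\dots,g_k)^T$; $M(P)$ is the $(h+k+1)\times(h+1)$ multiplication matrix with $0$-based entry $(i,j)$ equal to $g_{i-j}$ if $0\le i-j\le k$, else $0$. Put $K=F'_x+pF'_y$, $H=KF''_{pp}-K'_pF'_p$, $L=KF'_p$; take $M(F)$ of size $(3d-3)\times(2d-3)$, $M((F'_p)^2)$ of size $(3d-3)\times(d-1)$, $M(L),M(H)$ of size $(3d-3)\times(d-2)$. For a matrix $X$ with $3d-3$ rows, $X^+$ (resp. $X^-$) is the submatrix of its first $d$ (resp. last $2d-3$) rows. $N$ is the $(d-2)\times(d-2)$ matrix with only nonzero entries $N_{j,j+1}=j$ ($1\le j\le d-3$, 1-based). $B=M^+((F'_p)^2)-M^+(F)(M^-(F))^{-1}M^-((F'_p)^2)$ (rank $d-1$), $E=(M^+(H)-M^+(L)N)-M^+(F)(M^-(F))^{-1}(M^-(H)-M^-(L)N)$, $T$ a left inverse of $B$, and $M=-TE$. $I_0$ (resp. $I^0$) is the $(d-1)\times(d-2)$ matrix formed by $\mathrm{Id}_{d-2}$ followed by (resp.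 preceded by) a zero row. $J_0$ is the $(d-2)\times(d-1)$ matrix obtained by adding a column of zeros to the right of $\mathrm{Id}_{d-2}$. $M'_{a,b}$ denotes $\partial^{a+b}M/\partial x^a\partial y^b$ and $M^{\gamma,\delta}_{\alpha,\beta}:=\binom{\alpha}{\gamma}\binom{\beta}{\delta}M'_{\alpha-\gamma,\beta-\delta}$. $R_h$ (formal abelian relations of order $h$): its fiber at $m\in U$ is the set of families $(u_{\alpha,\beta})_{\alpha+\beta\le h}$ of vectors in $\mathbb{C}^{d-2}$ such that for all $\alpha,\beta\ge0$ with $\alpha+\beta\le h-1$: $$I_0u_{\alpha+1,\beta}+I^0u_{\alpha,\beta+1}=\sum_{\gamma=0}^\alpha\sum_{\delta=0}^\beta M^{\gamma,\delta}_{\alpha,\beta}(m)\,u_{\gamma,\delta}$$ (the equations obtained by differentiating $\alpha$ times in $x$ and $\beta$ times in $y$ the system $I_0r'_x+I^0r'_y=Mr$). *)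

theory Defs
  imports "Jordan_Normal_Form.Matrix" "HOL-Analysis.Derivative" "HOL-Computational_Algebra.Polynomial"
begin

type_synonym cfun = "complex \<times> complex \<Rightarrow> complex"

definition pdx :: "cfun \<Rightarrow> cfun" where
  "pdx f z = deriv (\<lambda>t. f (t, snd z)) (fst z)"
definition pdy :: "cfun \<Rightarrow> cfun" where
  "pdy f z = deriv (\<lambda>t. f (fst z, t)) (snd z)"

text \<open>Holomorphic in two variables (Osgood: continuous and separately holomorphic).\<close>
definition holo2 :: "(complex \<times> complex) set \<Rightarrow> cfun \<Rightarrow> bool" where
  "holo2 U f \<longleftrightarrow> continuous_on U f \<and>
     (\<forall>z\<in>U. (\<lambda>t. f (t, snd z)) field_differentiable at (fst z) \<and>
             (\<lambda>t. f (fst z, t)) field_differentiable at (snd z))"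

definition Fpoly :: "nat \<Rightarrow> (nat \<Rightarrow> cfun) \<Rightarrow> complex \<times> complex \<Rightarrow> complex poly" where
  "Fpoly d a z = (\<Sum>i\<le>d. monom (a i z) (d - i))"
definition Fxpoly :: "nat \<Rightarrow> (nat \<Rightarrow> cfun) \<Rightarrow> complex \<times> complex \<Rightarrow> complex poly" where
  "Fxpoly d a z = (\<Sum>i\<le>d. monom (pdx (a i) z) (d - i))"
definition Fypoly :: "nat \<Rightarrow> (nat \<Rightarrow> cfun) \<Rightarrow> complex \<times> complex \<Rightarrow> complex poly" where
  "Fypoly d a z = (\<Sum>i\<le>d. monom (pdy (a i) z) (d - i))"
definition Kpoly :: "nat \<Rightarrow> (nat \<Rightarrow> cfun) \<Rightarrow> complex \<times> complex \<Rightarrow> complex poly" where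
  "Kpoly d a z = Fxpoly d a z + [:0, 1:] * Fypoly d a z"
definition Hpoly :: "nat \<Rightarrow> (nat \<Rightarrow> cfun) \<Rightarrow> complex \<times> complex \<Rightarrow> complex poly" where
  "Hpoly d a z = Kpoly d a z * pderiv (pderiv (Fpoly d a z))
                 - pderiv (Kpoly d a z) * pderiv (Fpoly d a z)"
definition Lpoly :: "nat \<Rightarrow> (nat \<Rightarrow> cfun) \<Rightarrow> complex \<times> complex \<Rightarrow> complex poly" where
  "Lpoly d a z = Kpoly d a z * pderiv (Fpoly d a z)"

definition mulmat :: "nat \<Rightarrow> nat \<Rightarrow> complex poly \<Rightarrow> complex mat" where
  "mulmat r c P = Matrix.mat r c (\<lambda>(i, j). if j \<le> i then coeff P (i - j) else 0)"

definition topm :: "nat \<Rightarrow> complex mat \<Rightarrow> complex mat" where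
  "topm d X = Matrix.mat d (dim_col X) (\<lambda>(i, j). X $$ (i, j))"
definition botm :: "nat \<Rightarrow> complex mat \<Rightarrow> complex mat" where
  "botm d X = Matrix.mat (2 * d - 3) (dim_col X) (\<lambda>(i, j). X $$ (i + d, j))"

definition minv :: "nat \<Rightarrow> complex mat \<Rightarrow> complex mat" where
  "minv n A = (SOME X. X \<in> carrier_mat n n \<and> A * X = 1\<^sub>m n \<and> X * A = 1\<^sub>m n)"

definition Nmat :: "nat \<Rightarrow> complex mat" where
  "Nmat d = Matrix.mat (d - 2) (d - 2) (\<lambda>(i, j). if j = i + 1 then of_nat (i + 1) else 0)"

definition MF :: "nat \<Rightarrow> (nat \<Rightarrow> cfun) \<Rightarrow> complex \<times> complex \<Rightarrow> complex mat" where
  "MF d a z = mulmat (3 * d - 3) (2 * d - 3) (Fpoly d a z)"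
definition MFp2 :: "nat \<Rightarrow> (nat \<Rightarrow> cfun) \<Rightarrow> complex \<times> complex \<Rightarrow> complex mat" where
  "MFp2 d a z = mulmat (3 * d - 3) (d - 1) ((pderiv (Fpoly d a z))\<^sup>2)"
definition MLm :: "nat \<Rightarrow> (nat \<Rightarrow> cfun) \<Rightarrow> complex \<times> complex \<Rightarrow> complex mat" where
  "MLm d a z = mulmat (3 * d - 3) (d - 2) (Lpoly d a z)"
definition MHm :: "nat \<Rightarrow> (nat \<Rightarrow> cfun) \<Rightarrow> complex \<times> complex \<Rightarrow> complex mat" where
  "MHm d a z = mulmat (3 * d - 3) (d - 2) (Hpoly d a z)"

definition Bmat :: "nat \<Rightarrow> (nat \<Rightarrow> cfun) \<Rightarrow> complex \<times> complex \<Rightarrow> complex mat" where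
  "Bmat d a z = topm d (MFp2 d a z)
     - topm d (MF d a z) * minv (2 * d - 3) (botm d (MF d a z)) * botm d (MFp2 d a z)"
definition Emat :: "nat \<Rightarrow> (nat \<Rightarrow> cfun) \<Rightarrow> complex \<times> complex \<Rightarrow> complex mat" where
  "Emat d a z = (topm d (MHm d a z) - topm d (MLm d a z) * Nmat d)
     - topm d (MF d a z) * minv (2 * d - 3) (botm d (MF d a z))
       * (botm d (MHm d a z) - botm d (MLm d a z) * Nmat d)"

text \<open>The matrix M = -T E, for a left inverse T of B.\<close>
definition Mmat :: "nat \<Rightarrow> (nat \<Rightarrow> cfun) \<Rightarrow> (complex \<times> complex \<Rightarrow> complex mat)
    \<Rightarrow> complex \<times> complex \<Rightarrow> complex mat" where
  "Mmat d a T z = - (T z * Emat d a z)"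

definition Mder :: "nat \<Rightarrow> (nat \<Rightarrow> cfun) \<Rightarrow> (complex \<times> complex \<Rightarrow> complex mat)
    \<Rightarrow> nat \<Rightarrow> nat \<Rightarrow> complex \<times> complex \<Rightarrow> complex mat" where
  "Mder d a T \<alpha> \<beta> z = Matrix.mat (d - 1) (d - 2)
     (\<lambda>(i, j). (pdx ^^ \<alpha>) ((pdy ^^ \<beta>) (\<lambda>w. Mmat d a T w $$ (i, j))) z)"

definition Mcoef :: "nat \<Rightarrow> (nat \<Rightarrow> cfun) \<Rightarrow> (complex \<times> complex \<Rightarrow> complex mat)
    \<Rightarrow> complex \<times> complex \<Rightarrow> nat \<Rightarrow> nat \<Rightarrow> nat \<Rightarrow> nat \<Rightarrow> complex mat" where
  "Mcoef d a T z \<gamma> \<delta> \<alpha> \<beta> =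
     of_nat ((\<alpha> choose \<gamma>) * (\<beta> choose \<delta>)) \<cdot>\<^sub>m Mder d a T (\<alpha> - \<gamma>) (\<beta> - \<delta>) z"

definition I_low :: "nat \<Rightarrow> complex mat" where
  "I_low d = Matrix.mat (d - 1) (d - 2) (\<lambda>(i, j). if i = j then 1 else 0)"
definition I_up :: "nat \<Rightarrow> complex mat" where
  "I_up d = Matrix.mat (d - 1) (d - 2) (\<lambda>(i, j). if i = j + 1 then 1 else 0)"
definition J0 :: "nat \<Rightarrow> complex mat" where
  "J0 d = Matrix.mat (d - 2) (d - 1) (\<lambda>(i, j). if i = j then 1 else 0)"

definition vsum :: "nat \<Rightarrow> ('b \<Rightarrow> complex Matrix.vec) \<Rightarrow> 'b set \<Rightarrow> complex Matrix.vec" where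
  "vsum n f S = Matrix.vec n (\<lambda>i. \<Sum>s\<in>S. vec_index (f s) i)"
definition msum :: "nat \<Rightarrow> nat \<Rightarrow> ('b \<Rightarrow> complex mat) \<Rightarrow> 'b set \<Rightarrow> complex mat" where
  "msum n k f S = Matrix.mat n k (\<lambda>(i, j). \<Sum>s\<in>S. f s $$ (i, j))"

lemma msum_cong [fundef_cong]:
  "S = S' \<Longrightarrow> (\<And>x. x \<in> S' \<Longrightarrow> f x = g x) \<Longrightarrow> msum n k f S = msum n k g S'"
  unfolding msum_def by (auto intro!: sum.cong)

definition in_Rh :: "nat \<Rightarrow> (nat \<Rightarrow> cfun) \<Rightarrow> (complex \<times> complex \<Rightarrow> complex mat)
    \<Rightarrow> nat \<Rightarrow> complex \<times> complex \<Rightarrow> (nat \<Rightarrow> nat \<Rightarrow> complex Matrix.vec) \<Rightarrow> bool" where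
  "in_Rh d a T h m u \<longleftrightarrow>
     (\<forall>\<alpha> \<beta>. \<alpha> + \<beta> \<le> h \<longrightarrow> u \<alpha> \<beta> \<in> carrier_vec (d - 2)) \<and>
     (\<forall>\<alpha> \<beta>. \<alpha> + \<beta> + 1 \<le> h \<longrightarrow>
        I_low d *\<^sub>v u (\<alpha> + 1) \<beta> + I_up d *\<^sub>v u \<alpha> (\<beta> + 1) =
        vsum (d - 1) (\<lambda>(\<gamma>, \<delta>). Mcoef d a T m \<gamma> \<delta> \<alpha> \<beta> *\<^sub>v u \<gamma> \<delta>) ({0..\<alpha>} \<times> {0..\<beta>}))"

function Ecoef :: "nat \<Rightarrow> (nat \<Rightarrow> nat \<Rightarrow> nat \<Rightarrow> nat \<Rightarrow> complex mat)
    \<Rightarrow> nat \<Rightarrow> nat \<Rightarrow> nat \<Rightarrow> complex mat" where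
  "Ecoef d Mc h' 0 \<beta> = (if h' = \<beta> then 1\<^sub>m (d - 2) else 0\<^sub>m (d - 2) (d - 2))"
| "Ecoef d Mc h' (Suc \<alpha>) \<beta> =
     (if h' > Suc \<alpha> + \<beta> then 0\<^sub>m (d - 2) (d - 2)
      else - (J0 d * I_up d) * Ecoef d Mc h' \<alpha> (Suc \<beta>)
           + msum (d - 2) (d - 2) (\<lambda>(\<gamma>, \<delta>). (J0 d * Mc \<gamma> \<delta> \<alpha> \<beta>) * Ecoef d Mc h' \<gamma> \<delta>)
               ({0..\<alpha>} \<times> {0..\<beta>}))"
  by pat_completeness auto
termination
  by (relation "measure (\<lambda>(d, Mc, h', \<alpha>, \<beta>). \<alpha>)") auto

end

theory Submission
  imports Defs
begin



lemma vsum_carrier[simp]: "vsum n f S \<in> carrier_vec n"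
  by (simp add: vsum_def)
lemma dim_vsum[simp]: "dim_vec (vsum n f S) = n"
  by (simp add: vsum_def)
lemma index_vsum[simp]: "i < n \<Longrightarrow> vsum n f S $ i = (\<Sum>s\<in>S. f s $ i)"
  by (simp add: vsum_def)
lemma msum_carrier[simp]: "msum n k f S \<in> carrier_mat n k"
  by (simp add: msum_def)

lemma vsum_mult:
  assumes A: "A \<in> carrier_mat r n" and f: "\<And>s. s \<in> S \<Longrightarrow> f s \<in> carrier_vec n"
  shows "A *\<^sub>v vsum n f S = vsum r (\<lambda>s. A *\<^sub>v f s) S"
proof (rule eq_vecI)
  fix i assume "i < dim_vec (vsum r (\<lambda>s. A *\<^sub>v f s) S)"
  hence i: "i < r" by simp
  have "(A *\<^sub>v vsum n f S) $ i = (\<Sum>j<n. A $$ (i,j) * (\<Sum>s\<in>S. f s $ j))"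
    using A i by (simp add: scalar_prod_def lessThan_atLeast0)
  also have "\<dots> = (\<Sum>s\<in>S. \<Sum>j<n. A $$ (i,j) * f s $ j)"
    by (simp add: sum_distrib_left sum.swap[of _ S])
  also have "\<dots> = (\<Sum>s\<in>S. (A *\<^sub>v f s) $ i)"
  proof (intro sum.cong refl)
    fix s assume "s \<in> S"
    with f have "dim_vec (f s) = n" by auto
    then show "(\<Sum>j<n. A $$ (i,j) * f s $ j) = (A *\<^sub>v f s) $ i"
      using A i by (auto simp: scalar_prod_def lessThan_atLeast0)
  qed
  finally show "(A *\<^sub>v vsum n f S) $ i = vsum r (\<lambda>s. A *\<^sub>v f s) S $ i" using i by simp
qed (use A in simp)

lemma msum_mult_vec:
  assumes f: "\<And>s. s \<in> S \<Longrightarrow> f s \<in> carrier_mat n k" and v: "v \<in> carrier_vec k"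
  shows "msum n k f S *\<^sub>v v = vsum n (\<lambda>s. f s *\<^sub>v v) S"
proof (rule eq_vecI)
  fix i assume "i < dim_vec (vsum n (\<lambda>s. f s *\<^sub>v v) S)"
  hence i: "i < n" by simp
  have "(msum n k f S *\<^sub>v v) $ i = (\<Sum>j<k. (\<Sum>s\<in>S. f s $$ (i,j)) * v $ j)"
    using v i by (simp add: scalar_prod_def lessThan_atLeast0 msum_def)
  also have "\<dots> = (\<Sum>s\<in>S. \<Sum>j<k. f s $$ (i,j) * v $ j)"
    by (simp add: sum_distrib_right sum.swap[of _ S])
  also have "\<dots> = (\<Sum>s\<in>S. (f s *\<^sub>v v) $ i)"
  proof (intro sum.cong refl)
    fix s assume "s \<in> S"
    with f have "f s \<in> carrier_mat n k" by auto
    then show "(\<Sum>j<k. f s $$ (i,j) * v $ j) = (f s *\<^sub>v v) $ i"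
      using v i by (auto simp: scalar_prod_def lessThan_atLeast0)
  qed
  finally show "(msum n k f S *\<^sub>v v) $ i = vsum n (\<lambda>s. f s *\<^sub>v v) S $ i" using i by simp
qed (simp add: msum_def)

lemma vsum_add:
  assumes "\<And>s. s \<in> S \<Longrightarrow> g s \<in> carrier_vec n"
  shows "vsum n (\<lambda>s. f s + g s) S = vsum n f S + vsum n g S"
proof (rule eq_vecI)
  fix i assume "i < dim_vec (vsum n f S + vsum n g S)"
  hence i: "i < n" by simp
  have "(\<Sum>s\<in>S. (f s + g s) $ i) = (\<Sum>s\<in>S. f s $ i + g s $ i)"
  proof (rule sum.cong[OF refl])
    fix s assume "s \<in> S"
    hence "dim_vec (g s) = n" using assms by auto
    thus "(f s + g s) $ i = f s $ i + g s $ i" using i by simp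
  qed
  thus "vsum n (\<lambda>s. f s + g s) S $ i = (vsum n f S + vsum n g S) $ i"
    using i by (simp add: sum.distrib)
qed simp

lemma vsum_uminus:
  assumes "\<And>s. s \<in> S \<Longrightarrow> f s \<in> carrier_vec n"
  shows "vsum n (\<lambda>s. - f s) S = - vsum n f S"
proof (rule eq_vecI)
  fix i assume "i < dim_vec (- vsum n f S)"
  hence i: "i < n" by simp
  have "(\<Sum>s\<in>S. (- f s) $ i) = (\<Sum>s\<in>S. - (f s $ i))"
  proof (rule sum.cong[OF refl])
    fix s assume "s \<in> S"
    hence "dim_vec (f s) = n" using assms by auto
    thus "(- f s) $ i = - (f s $ i)" using i by simp
  qed
  thus "vsum n (\<lambda>s. - f s) S $ i = (- vsum n f S) $ i"
    using i by (simp add: sum_negf)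
qed simp

lemma vsum_swap: "vsum n (\<lambda>k. vsum n (\<lambda>s. g k s) S) K = vsum n (\<lambda>s. vsum n (\<lambda>k. g k s) K) S"
  by (intro eq_vecI) (auto simp: sum.swap[of _ S])

lemma vsum_cong: "S = S' \<Longrightarrow> (\<And>s. s \<in> S \<Longrightarrow> f s = g s) \<Longrightarrow> vsum n f S = vsum n g S'"
  by (simp add: vsum_def)

lemma vsum_mono_zero:
  assumes "finite T" "S \<subseteq> T" "\<And>s. s \<in> T - S \<Longrightarrow> f s = 0\<^sub>v n"
  shows "vsum n f T = vsum n f S"
  using assms by (intro eq_vecI) (auto intro!: sum.mono_neutral_right)

lemma Ecoef_carrier: "Ecoef d Mc k \<alpha> \<beta> \<in> carrier_mat (d-2) (d-2)"
  by (induction d Mc k \<alpha> \<beta> rule: Ecoef.induct) auto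

lemma Ecoef_zero: "k > \<alpha> + \<beta> \<Longrightarrow> Ecoef d Mc k \<alpha> \<beta> = 0\<^sub>m (d-2) (d-2)"
  by (cases \<alpha>) auto

lemma Mcoef_carrier: "Mcoef d a T m \<gamma> \<delta> \<alpha> \<beta> \<in> carrier_mat (d-1) (d-2)"
  by (simp add: Mcoef_def Mder_def)

lemma J0_Ilow: assumes "d \<ge> 3" "x \<in> carrier_vec (d-2)"
  shows "J0 d *\<^sub>v (I_low d *\<^sub>v x) = x"
proof (rule eq_vecI)
  fix i assume "i < dim_vec x"
  hence i: "i < d - 2" using assms by simp
  have dx: "dim_vec x = d - 2" using assms by simp
  have J: "(J0 d *\<^sub>v w) $ i = w $ i" if dw: "dim_vec w = d - 1" for w :: "complex Matrix.vec"
  proof -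
    have "(J0 d *\<^sub>v w) $ i = (\<Sum>j<d-1. (if i = j then 1 else 0) * w $ j)"
      using i dw by (simp add: J0_def scalar_prod_def lessThan_atLeast0)
    also have "\<dots> = (\<Sum>j<d-1. if i = j then w $ j else 0)" by (intro sum.cong) auto
    also have "\<dots> = w $ i" using i by simp
    finally show ?thesis .
  qed
  have "(I_low d *\<^sub>v x) $ i = (\<Sum>j<d-2. (if i = j then 1 else 0) * x $ j)"
    using i dx by (simp add: I_low_def scalar_prod_def lessThan_atLeast0)
  also have "\<dots> = (\<Sum>j<d-2. if i = j then x $ j else 0)" by (intro sum.cong) auto
  also have "\<dots> = x $ i" using i by simp
  finally have "(I_low d *\<^sub>v x) $ i = x $ i" .
  moreover have "(J0 d *\<^sub>v (I_low d *\<^sub>v x)) $ i = (I_low d *\<^sub>v x) $ i"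
    by (rule J) (simp add: I_low_def)
  ultimately show "(J0 d *\<^sub>v (I_low d *\<^sub>v x)) $ i = x $ i" by simp
qed (use assms in \<open>simp add: J0_def\<close>)


theorem theorem2:
  fixes d h :: nat and U :: "(complex \<times> complex) set" and m :: "complex \<times> complex"
    and a :: "nat \<Rightarrow> cfun" and p :: "nat \<Rightarrow> cfun"
    and T :: "complex \<times> complex \<Rightarrow> complex mat"
    and u :: "nat \<Rightarrow> nat \<Rightarrow> complex Matrix.vec"
  assumes d3: "d \<ge> 3"
    and U_open: "open U"
    and a0: "a 0 = (\<lambda>_. 1)"
    and a_holo: "\<forall>i\<le>d. holo2 U (a i)"
    and p_holo: "\<forall>i<d. holo2 U (p i)"
    and F_factor: "\<forall>z\<in>U. Fpoly d a z = (\<Prod>i<d. [:- p i z, 1:])"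
    and p_distinct: "\<forall>z\<in>U. \<forall>i<d. \<forall>j<d. i \<noteq> j \<longrightarrow> p i z \<noteq> p j z"
    and T_dim: "\<forall>z\<in>U. T z \<in> carrier_mat (d - 1) d"
    and T_left_inv: "\<forall>z\<in>U. T z * Bmat d a z = 1\<^sub>m (d - 1)"
    and T_holo: "\<forall>i<d - 1. \<forall>j<d. holo2 U (\<lambda>z. T z $$ (i, j))"
    and m_in: "m \<in> U"
    and u_R: "in_Rh d a T h m u"
  shows "\<forall>\<alpha> \<beta>. \<alpha> + \<beta> \<le> h \<longrightarrow>
           u \<alpha> \<beta> = vsum (d - 2) (\<lambda>k. Ecoef d (Mcoef d a T m) k \<alpha> \<beta> *\<^sub>v u 0 k) {0..\<alpha> + \<beta>}"
proof -
  define n where "n = d - 2"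
  define Mc where "Mc = Mcoef d a T m"
  define E where "E = Ecoef d Mc"
  have d1: "d - 1 = Suc n" using d3 by (simp add: n_def)
  have ucar: "\<And>\<alpha> \<beta>. \<alpha> + \<beta> \<le> h \<Longrightarrow> u \<alpha> \<beta> \<in> carrier_vec n"
    using conjunct1[OF u_R[unfolded in_Rh_def]] unfolding n_def by blast
  have rel: "\<And>\<alpha> \<beta>. \<alpha> + \<beta> + 1 \<le> h \<Longrightarrow>
        I_low d *\<^sub>v u (\<alpha> + 1) \<beta> + I_up d *\<^sub>v u \<alpha> (\<beta> + 1) =
        vsum (d - 1) (\<lambda>(\<gamma>, \<delta>). Mc \<gamma> \<delta> \<alpha> \<beta> *\<^sub>v u \<gamma> \<delta>) ({0..\<alpha>} \<times> {0..\<beta>})"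
    unfolding Mc_def by (rule conjunct2[OF u_R[unfolded in_Rh_def], rule_format])
  have Ecar: "\<And>k \<alpha> \<beta>. E k \<alpha> \<beta> \<in> carrier_mat n n"
    unfolding E_def n_def by (rule Ecoef_carrier)
  have Mccar: "\<And>\<gamma> \<delta> \<alpha> \<beta>. Mc \<gamma> \<delta> \<alpha> \<beta> \<in> carrier_mat (d - 1) n"
    unfolding Mc_def n_def by (rule Mcoef_carrier)
  have J0car: "J0 d \<in> carrier_mat n (d - 1)" by (simp add: J0_def n_def)
  have Iupcar: "I_up d \<in> carrier_mat (d - 1) n" by (simp add: I_up_def n_def)
  have Ilowcar: "I_low d \<in> carrier_mat (d - 1) n" by (simp add: I_low_def n_def)
  have main: "\<forall>\<beta>. \<alpha> + \<beta> \<le> h \<longrightarrow> u \<alpha> \<beta> = vsum n (\<lambda>k. E k \<alpha> \<beta> *\<^sub>v u 0 k) {0..\<alpha> + \<beta>}" for \<alpha>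
  proof (induction \<alpha> rule: less_induct)
    case (less \<alpha>)
    show ?case
    proof (cases \<alpha>)
      case 0
      show ?thesis
      proof (intro allI impI)
        fix \<beta> assume h: "\<alpha> + \<beta> \<le> h"
        have "vsum n (\<lambda>k. E k \<alpha> \<beta> *\<^sub>v u 0 k) {0..\<alpha> + \<beta>}
            = vsum n (\<lambda>k. if k = \<beta> then u 0 \<beta> else 0\<^sub>v n) {0..\<beta>}"
          using 0 h ucar by (intro vsum_cong) (auto simp: E_def n_def)
        also have "\<dots> = vsum n (\<lambda>k. if k = \<beta> then u 0 \<beta> else 0\<^sub>v n) {\<beta>}"
          by (intro vsum_mono_zero) auto
        also have "\<dots> = u 0 \<beta>"
          using ucar[of 0 \<beta>] h 0 by (intro eq_vecI) auto
        finally show "u \<alpha> \<beta> = vsum n (\<lambda>k. E k \<alpha> \<beta> *\<^sub>v u 0 k) {0..\<alpha> + \<beta>}"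
          using 0 by simp
      qed
    next
      case (Suc a')
      show ?thesis
      proof (intro allI impI)
        fix \<beta> assume h: "\<alpha> + \<beta> \<le> h"
        define R where "R = {0..a'} \<times> {0..\<beta>}"
        define K where "K = {0..Suc a' + \<beta>}"
        have IHa: "u a' (Suc \<beta>) = vsum n (\<lambda>k. E k a' (Suc \<beta>) *\<^sub>v u 0 k) K"
          using less.IH[of a'] Suc h by (auto simp: K_def)
        have IHg: "vsum n (\<lambda>k. E k \<gamma> \<delta> *\<^sub>v u 0 k) K = u \<gamma> \<delta>" if "(\<gamma>, \<delta>) \<in> R" for \<gamma> \<delta>
        proof -
          have "vsum n (\<lambda>k. E k \<gamma> \<delta> *\<^sub>v u 0 k) K = vsum n (\<lambda>k. E k \<gamma> \<delta> *\<^sub>v u 0 k) {0..\<gamma>+\<delta>}"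
            using that h Suc ucar
            by (intro vsum_mono_zero) (auto simp: K_def R_def E_def Ecoef_zero n_def)
          also have "\<dots> = u \<gamma> \<delta>" using less.IH[of \<gamma>] that Suc h by (auto simp: R_def)
          finally show ?thesis .
        qed
        define V where "V = vsum (d - 1) (\<lambda>(\<gamma>, \<delta>). Mc \<gamma> \<delta> a' \<beta> *\<^sub>v u \<gamma> \<delta>) R"
        have r: "I_low d *\<^sub>v u (Suc a') \<beta> + I_up d *\<^sub>v u a' (Suc \<beta>) = V"
          using rel[of a' \<beta>] Suc h by (simp add: V_def R_def)
        have x: "u (Suc a') \<beta> + (J0 d * I_up d) *\<^sub>v u a' (Suc \<beta>) = J0 d *\<^sub>v V"
        proof -
          have "J0 d *\<^sub>v (I_low d *\<^sub>v u (Suc a') \<beta> + I_up d *\<^sub>v u a' (Suc \<beta>)) = J0 d *\<^sub>v V"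
            using r by simp
          moreover have "J0 d *\<^sub>v (I_low d *\<^sub>v u (Suc a') \<beta> + I_up d *\<^sub>v u a' (Suc \<beta>))
              = J0 d *\<^sub>v (I_low d *\<^sub>v u (Suc a') \<beta>) + J0 d *\<^sub>v (I_up d *\<^sub>v u a' (Suc \<beta>))"
            using J0car Ilowcar Iupcar ucar[of "Suc a'" \<beta>] ucar[of a' "Suc \<beta>"] Suc h
            by (intro mult_add_distrib_mat_vec) auto
          moreover have "J0 d *\<^sub>v (I_low d *\<^sub>v u (Suc a') \<beta>) = u (Suc a') \<beta>"
            using J0_Ilow[OF d3] ucar[of "Suc a'" \<beta>] Suc h by (auto simp: n_def)
          moreover have "J0 d *\<^sub>v (I_up d *\<^sub>v u a' (Suc \<beta>)) = (J0 d * I_up d) *\<^sub>v u a' (Suc \<beta>)"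
            using J0car Iupcar ucar[of a' "Suc \<beta>"] Suc h by (auto simp: assoc_mult_mat_vec)
          ultimately show ?thesis by simp
        qed
        have ux: "u (Suc a') \<beta> = J0 d *\<^sub>v V + - ((J0 d * I_up d) *\<^sub>v u a' (Suc \<beta>))"
        proof -
          have c1: "u (Suc a') \<beta> \<in> carrier_vec n" using ucar[of "Suc a'" \<beta>] Suc h by simp
          have c2: "(J0 d * I_up d) *\<^sub>v u a' (Suc \<beta>) \<in> carrier_vec n"
          proof -
            have "a' + Suc \<beta> \<le> h" using Suc h by simp
            thus ?thesis by (rule mult_mat_vec_carrier[OF mult_carrier_mat[OF J0car Iupcar] ucar])
          qed
          have c3: "J0 d *\<^sub>v V \<in> carrier_vec n" unfolding V_def by (rule mult_mat_vec_carrier[OF J0car vsum_carrier])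
          define w where "w = (J0 d * I_up d) *\<^sub>v u a' (Suc \<beta>)"
          define y where "y = J0 d *\<^sub>v V"
          have xx: "u (Suc a') \<beta> + w = y" using x by (simp add: w_def y_def)
          have dw: "dim_vec w = n" using carrier_vecD[OF c2] unfolding w_def .
          have dy: "dim_vec y = n" using carrier_vecD[OF c3] unfolding y_def .
          have du: "dim_vec (u (Suc a') \<beta>) = n" using carrier_vecD[OF c1] .
          have "u (Suc a') \<beta> = y + - w"
          proof (rule eq_vecI)
            fix i assume "i < dim_vec (y + - w)"
            hence i: "i < n" using dy dw by simp
            have "(u (Suc a') \<beta> + w) $ i = y $ i" using xx by simp
            hence "u (Suc a') \<beta> $ i + w $ i = y $ i" using i dw by simp
            hence "u (Suc a') \<beta> $ i = y $ i - w $ i" by (simp add: eq_diff_eq)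
            thus "u (Suc a') \<beta> $ i = (y + - w) $ i" using i dw by simp
          qed (simp add: du dy dw)
          thus ?thesis by (simp add: w_def y_def)
        qed
        define S where "S = J0 d * I_up d"
        have Scar: "S \<in> carrier_mat n n" using J0car Iupcar by (simp add: S_def)
        have u0car: "\<And>k. k \<in> K \<Longrightarrow> u 0 k \<in> carrier_vec n"
          using ucar h Suc by (auto simp: K_def)
        have step: "E k (Suc a') \<beta> *\<^sub>v u 0 k = - (S *\<^sub>v (E k a' (Suc \<beta>) *\<^sub>v u 0 k))
              + vsum n (\<lambda>s. J0 d *\<^sub>v (Mc (fst s) (snd s) a' \<beta> *\<^sub>v (E k (fst s) (snd s) *\<^sub>v u 0 k))) R"
          if k: "k \<in> K" for k
        proof -
          have w: "u 0 k \<in> carrier_vec n" using u0car k .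
          have Ek: "E k (Suc a') \<beta> = (- S) * E k a' (Suc \<beta>)
              + msum n n (\<lambda>(\<gamma>, \<delta>). (J0 d * Mc \<gamma> \<delta> a' \<beta>) * E k \<gamma> \<delta>) R"
            using k by (auto simp: E_def K_def R_def n_def S_def)
          have m1: "((- S) * E k a' (Suc \<beta>)) *\<^sub>v u 0 k = - (S *\<^sub>v (E k a' (Suc \<beta>) *\<^sub>v u 0 k))"
          proof -
            have "((- S) * E k a' (Suc \<beta>)) *\<^sub>v u 0 k = (- S) *\<^sub>v (E k a' (Suc \<beta>) *\<^sub>v u 0 k)"
              by (rule assoc_mult_mat_vec[OF uminus_carrier_mat[OF Scar] Ecar w])
            also have "\<dots> = - (S *\<^sub>v (E k a' (Suc \<beta>) *\<^sub>v u 0 k))"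
              by (rule uminus_mult_mat_vec) (simp add: carrier_matD[OF Scar] carrier_matD[OF Ecar])
            finally show ?thesis .
          qed
          have m2: "msum n n (\<lambda>(\<gamma>, \<delta>). (J0 d * Mc \<gamma> \<delta> a' \<beta>) * E k \<gamma> \<delta>) R *\<^sub>v u 0 k
              = vsum n (\<lambda>s. (case s of (\<gamma>, \<delta>) \<Rightarrow> (J0 d * Mc \<gamma> \<delta> a' \<beta>) * E k \<gamma> \<delta>) *\<^sub>v u 0 k) R"
            using w by (intro msum_mult_vec) (auto intro!: mult_carrier_mat[OF mult_carrier_mat[OF J0car Mccar] Ecar])
          have m3: "vsum n (\<lambda>s. (case s of (\<gamma>, \<delta>) \<Rightarrow> (J0 d * Mc \<gamma> \<delta> a' \<beta>) * E k \<gamma> \<delta>) *\<^sub>v u 0 k) R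
              = vsum n (\<lambda>s. J0 d *\<^sub>v (Mc (fst s) (snd s) a' \<beta> *\<^sub>v (E k (fst s) (snd s) *\<^sub>v u 0 k))) R"
          proof (intro vsum_cong refl)
            fix s :: "nat \<times> nat"
            obtain g e where s: "s = (g, e)" by force
            have "(J0 d * Mc g e a' \<beta> * E k g e) *\<^sub>v u 0 k = (J0 d * Mc g e a' \<beta>) *\<^sub>v (E k g e *\<^sub>v u 0 k)"
              by (rule assoc_mult_mat_vec[OF mult_carrier_mat[OF J0car Mccar] Ecar w])
            also have "\<dots> = J0 d *\<^sub>v (Mc g e a' \<beta> *\<^sub>v (E k g e *\<^sub>v u 0 k))"
              by (rule assoc_mult_mat_vec[OF J0car Mccar mult_mat_vec_carrier[OF Ecar w]])
            finally show "(case s of (\<gamma>, \<delta>) \<Rightarrow> (J0 d * Mc \<gamma> \<delta> a' \<beta>) * E k \<gamma> \<delta>) *\<^sub>v u 0 k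
              = J0 d *\<^sub>v (Mc (fst s) (snd s) a' \<beta> *\<^sub>v (E k (fst s) (snd s) *\<^sub>v u 0 k))" by (simp add: s)
          qed
          have "E k (Suc a') \<beta> *\<^sub>v u 0 k = ((- S) * E k a' (Suc \<beta>)) *\<^sub>v u 0 k
              + msum n n (\<lambda>(\<gamma>, \<delta>). (J0 d * Mc \<gamma> \<delta> a' \<beta>) * E k \<gamma> \<delta>) R *\<^sub>v u 0 k"
            unfolding Ek by (rule add_mult_distrib_mat_vec[OF mult_carrier_mat[OF uminus_carrier_mat[OF Scar] Ecar] msum_carrier w])
          also have "\<dots> = - (S *\<^sub>v (E k a' (Suc \<beta>) *\<^sub>v u 0 k))
              + vsum n (\<lambda>s. J0 d *\<^sub>v (Mc (fst s) (snd s) a' \<beta> *\<^sub>v (E k (fst s) (snd s) *\<^sub>v u 0 k))) R"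
            by (simp only: m1 m2 m3)
          finally show ?thesis .
        qed
        define AA where "AA = (\<lambda>k. - (S *\<^sub>v (E k a' (Suc \<beta>) *\<^sub>v u 0 k)))"
        define BB where "BB = (\<lambda>k. vsum n (\<lambda>s. J0 d *\<^sub>v (Mc (fst s) (snd s) a' \<beta> *\<^sub>v (E k (fst s) (snd s) *\<^sub>v u 0 k))) R)"
        have e3: "vsum n AA K = - (S *\<^sub>v u a' (Suc \<beta>))"
        proof -
          have "vsum n AA K = - vsum n (\<lambda>k. S *\<^sub>v (E k a' (Suc \<beta>) *\<^sub>v u 0 k)) K"
            unfolding AA_def using Scar Ecar u0car by (intro vsum_uminus) (meson mult_mat_vec_carrier)
          also have "\<dots> = - (S *\<^sub>v vsum n (\<lambda>k. E k a' (Suc \<beta>) *\<^sub>v u 0 k) K)"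
          proof -
            have "S *\<^sub>v vsum n (\<lambda>k. E k a' (Suc \<beta>) *\<^sub>v u 0 k) K = vsum n (\<lambda>k. S *\<^sub>v (E k a' (Suc \<beta>) *\<^sub>v u 0 k)) K"
              by (rule vsum_mult[OF Scar]) (use Ecar u0car in \<open>meson mult_mat_vec_carrier\<close>)
            thus ?thesis by simp
          qed
          finally show ?thesis using IHa by simp
        qed
        have e4: "vsum n BB K = J0 d *\<^sub>v V"
        proof -
          have "vsum n BB K
            = vsum n (\<lambda>s. vsum n (\<lambda>k. J0 d *\<^sub>v (Mc (fst s) (snd s) a' \<beta> *\<^sub>v (E k (fst s) (snd s) *\<^sub>v u 0 k))) K) R"
            unfolding BB_def by (rule vsum_swap)
          also have "\<dots> = vsum n (\<lambda>s. J0 d *\<^sub>v (Mc (fst s) (snd s) a' \<beta> *\<^sub>v u (fst s) (snd s))) R"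
          proof (intro vsum_cong refl)
            fix s assume sR: "s \<in> R"
            have "vsum n (\<lambda>k. J0 d *\<^sub>v (Mc (fst s) (snd s) a' \<beta> *\<^sub>v (E k (fst s) (snd s) *\<^sub>v u 0 k))) K
                = J0 d *\<^sub>v vsum (d - 1) (\<lambda>k. Mc (fst s) (snd s) a' \<beta> *\<^sub>v (E k (fst s) (snd s) *\<^sub>v u 0 k)) K"
              by (rule vsum_mult[OF J0car, symmetric]) (use Mccar Ecar u0car in \<open>meson mult_mat_vec_carrier\<close>)
            also have "\<dots> = J0 d *\<^sub>v (Mc (fst s) (snd s) a' \<beta> *\<^sub>v vsum n (\<lambda>k. E k (fst s) (snd s) *\<^sub>v u 0 k) K)"
              by (subst vsum_mult[OF Mccar]) (use Ecar u0car in \<open>meson mult_mat_vec_carrier\<close>, rule refl)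
            also have "\<dots> = J0 d *\<^sub>v (Mc (fst s) (snd s) a' \<beta> *\<^sub>v u (fst s) (snd s))"
              using IHg[of "fst s" "snd s"] sR by simp
            finally show "vsum n (\<lambda>k. J0 d *\<^sub>v (Mc (fst s) (snd s) a' \<beta> *\<^sub>v (E k (fst s) (snd s) *\<^sub>v u 0 k))) K
                = J0 d *\<^sub>v (Mc (fst s) (snd s) a' \<beta> *\<^sub>v u (fst s) (snd s))" .
          qed
          also have "\<dots> = J0 d *\<^sub>v vsum (d - 1) (\<lambda>s. Mc (fst s) (snd s) a' \<beta> *\<^sub>v u (fst s) (snd s)) R"
          proof (rule vsum_mult[OF J0car, symmetric])
            fix s assume "s \<in> R"
            hence "fst s + snd s \<le> h" using h Suc by (auto simp: R_def)
            thus "Mc (fst s) (snd s) a' \<beta> *\<^sub>v u (fst s) (snd s) \<in> carrier_vec (d - 1)"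
              by (rule mult_mat_vec_carrier[OF Mccar ucar])
          qed
          also have "\<dots> = J0 d *\<^sub>v V"
            unfolding V_def by (intro arg_cong[where f="\<lambda>x. J0 d *\<^sub>v x"] vsum_cong) (auto split: prod.splits)
          finally show ?thesis .
        qed
        have "vsum n (\<lambda>k. E k \<alpha> \<beta> *\<^sub>v u 0 k) {0..\<alpha> + \<beta>} = vsum n (\<lambda>k. AA k + BB k) K"
          using step by (intro vsum_cong) (auto simp: K_def Suc AA_def BB_def)
        also have "\<dots> = vsum n AA K + vsum n BB K"
          by (rule vsum_add) (simp add: BB_def)
        also have "\<dots> = - (S *\<^sub>v u a' (Suc \<beta>)) + J0 d *\<^sub>v V"
          by (simp only: e3 e4)
        also have "\<dots> = J0 d *\<^sub>v V + - (S *\<^sub>v u a' (Suc \<beta>))"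
        proof -
          have a1: "S *\<^sub>v u a' (Suc \<beta>) \<in> carrier_vec n" using Scar ucar[of a' "Suc \<beta>"] h Suc by simp
          have a2: "J0 d *\<^sub>v V \<in> carrier_vec n" unfolding V_def by (rule mult_mat_vec_carrier[OF J0car vsum_carrier])
          show ?thesis by (rule comm_add_vec) (use a1 a2 in simp_all)
        qed
        also have "\<dots> = u \<alpha> \<beta>" using ux Suc by (simp add: S_def)
        finally show "u \<alpha> \<beta> = vsum n (\<lambda>k. E k \<alpha> \<beta> *\<^sub>v u 0 k) {0..\<alpha> + \<beta>}" by simp
      qed
    qed
  qed
  show ?thesis
  proof (intro allI impI)
    fix \<alpha> \<beta> :: nat assume hb: "\<alpha> + \<beta> \<le> h"
    show "u \<alpha> \<beta> = vsum (d - 2) (\<lambda>k. Ecoef d (Mcoef d a T m) k \<alpha> \<beta> *\<^sub>v u 0 k) {0..\<alpha> + \<beta>}"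
      using main[of \<alpha>, rule_format, OF hb] unfolding n_def E_def Mc_def .
  qed
qed

end
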